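(* Let $X$ be a nonnegative integer-valued random variable whose PGF $X(z)$ has radius of convergence $r>1$, mean $\mu=X'(1)>0$, such that $|X(z)|<X(r_1)$ whenever $|z|=r_1$, $z\ne r_1$, $r_1\in(0,r)$. For positive integers $n,s$ let $A(z)=X(z)^n$, with $n\mu<s$ and degree of $X(z)$ larger than $s/n$; write $n\mu/s=1-\gamma/\sqrt s$ (so $\gamma=(s-n\mu)/\sqrt{s}>0$). Let $z_1,\dots,z_{s-1}$ be the zeros of $z^s-A(z)$ in $|z|<1$ and $Z_0$ the zero of minimal modulus in $1<|z|<r$. For $Z\in\mathbb{C}$, $|Z|\ge1$, let $$P(Z)=\prod_{j=1}^{s-1}(1-z_j/Z)=\exp\Big(\sum_{j=1}^{s-1}\ln(1-z_j/Z)\Big)$$ (principal logarithm), and for $\varepsilon>0$ with $1<1+\varepsilon<Z_0$ let $$I(Z)=\frac{1}{2\pi i}\int_{|z|=1+\varepsilon}\frac{\ln(1-z^{-s}A(z))}{Z-z}\,dz.$$ Then, for $|Z|\ge1$, $$\ln P(Z)=\begin{cases}-\ln(1-Z^{-1})+I(Z), & 1+\varepsilon<|Z|<r,\\ -\ln(1-Z^{-1})+\ln(1-Z^{-s}A(Z))+I(Z), & 1<|Z|<1+\varepsilon,\\ \ln(\gamma\sqrt s)+I(1), & Z=1.\end{cases}$$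
   Context: Under the assumptions, $z^s-A(z)$ has exactly the zeros $z_0=1,z_1,\dots,z_{s-1}$ in $|z|\le1$ (with $z_1,\dots,z_{s-1}$ in $|z|<1$), and $Z_0>1$ is real. *)

theory Defs
  imports "HOL-Probability.Probability_Mass_Function" "HOL-Complex_Analysis.Complex_Analysis"
begin

definition pgf :: "nat pmf \<Rightarrow> complex \<Rightarrow> complex" where
  "pgf X z = (\<Sum>k. complex_of_real (pmf X k) * z ^ k)"

end

theory Submission
  imports Defs
begin



lemma circ_inv_subst:
  assumes r: "r > 0"
  shows "contour_integral (circlepath 0 r) h =
         contour_integral (circlepath 0 (1/r)) (\<lambda>u. h (1/u) / u^2)"
proof -
  let ?\<gamma> = "circlepath (0::complex) (1/r)"
  have eq: "(\<lambda>u. 1/u) \<circ> ?\<gamma> = reversepath (circlepath 0 r)"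
  proof
    fix t :: real
    have e1: "exp (2 * of_real pi * \<i> * of_real (1 - t)) = exp (- (2 * of_real pi * \<i> * of_real t))"
      by (simp add: algebra_simps exp_diff exp_minus) (metis inverse_eq_divide)
    have e2: "1 / exp (2 * of_real pi * \<i> * of_real t) = exp (- (2 * of_real pi * \<i> * of_real t))"
      by (metis exp_minus inverse_eq_divide)
    have "((\<lambda>u. 1/u) \<circ> ?\<gamma>) t = 1 / (of_real (1/r) * exp (2 * of_real pi * \<i> * of_real t))"
      by (simp add: circlepath)
    also have "\<dots> = of_real r * (1 / exp (2 * of_real pi * \<i> * of_real t))"
      using r by (simp add: field_simps)
    also have "\<dots> = of_real r * exp (2 * of_real pi * \<i> * of_real (1 - t))"
      by (simp only: e1 e2)
    also have "\<dots> = reversepath (circlepath 0 r) t"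
      by (simp add: circlepath reversepath_def)
    finally show "((\<lambda>u. 1/u) \<circ> ?\<gamma>) t = reversepath (circlepath 0 r) t" .
  qed
  have pim: "path_image ?\<gamma> \<subseteq> - {0}" using r by auto
  have "contour_integral ((\<lambda>u. 1/u) \<circ> ?\<gamma>) h =
        contour_integral ?\<gamma> (\<lambda>w. deriv (\<lambda>u. 1/u) w * h (1/w))"
    by (rule contour_integral_comp_analyticW[OF _ _ pim]) (auto intro!: analytic_intros)
  also have "\<dots> = contour_integral ?\<gamma> (\<lambda>w. - (h (1/w) / w^2))"
  proof (rule contour_integral_cong)
    fix w assume "w \<in> path_image ?\<gamma>"
    then have w: "w \<noteq> 0" using r by auto
    have "((\<lambda>u. 1/u) has_field_derivative (- 1 / w^2)) (at w)"
      using w by (auto intro!: derivative_eq_intros simp: field_simps power2_eq_square)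
    then have "deriv (\<lambda>u. 1/u) w = - 1 / w^2" by (rule DERIV_imp_deriv)
    then show "deriv (\<lambda>u. 1/u) w * h (1/w) = - (h (1/w) / w^2)" by simp
  qed simp
  also have "\<dots> = - contour_integral ?\<gamma> (\<lambda>w. h (1/w) / w^2)"
    by (rule contour_integral_neg)
  finally have "contour_integral (reversepath (circlepath 0 r)) h =
      - contour_integral ?\<gamma> (\<lambda>w. h (1/w) / w^2)" using eq by simp
  then show ?thesis by (simp add: contour_integral_reversepath)
qed

lemma ext_part:
  assumes holK: "K holomorphic_on ball 0 1" and K0: "K 0 = 0" and r: "1 < r"
    and Z: "Z \<noteq> 0" "norm Z \<noteq> r"
  shows "contour_integral (circlepath 0 r) (\<lambda>z. K (1/z) / (Z - z)) =
         (if r < norm Z then 2 * of_real pi * \<i> * K (1/Z) else 0)"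
proof -
  let ?\<gamma> = "circlepath (0::complex) (1/r)"
  have r0: "0 < 1/r" "1/r < 1" using r by auto
  have holKc: "K holomorphic_on cball 0 (1/r)"
    by (rule holomorphic_on_subset[OF holK]) (use r0(2) in \<open>auto simp: subset_iff dist_norm intro: le_less_trans\<close>)
  have i0: "((\<lambda>u. K u / (u - 0)) has_contour_integral 0) ?\<gamma>"
    using Cauchy_integral_circlepath_simple[OF holKc, of 0] r0 K0 by simp
  have i1: "((\<lambda>u. K u / (u - 1/Z)) has_contour_integral
              (if r < norm Z then 2 * of_real pi * \<i> * K (1/Z) else 0)) ?\<gamma>"
  proof (cases "r < norm Z")
    case True
    then have "norm (1/Z - 0) < 1/r" using r Z by (simp add: norm_divide field_simps)
    from Cauchy_integral_circlepath_simple[OF holKc this] True show ?thesis by simp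
  next
    case False
    then have nZ: "norm Z < r" using Z by auto
    define e where "e = min 1 (1 / norm Z)"
    have e: "1/r < e" using nZ r Z by (auto simp: e_def field_simps)
    have "((\<lambda>u. K u / (u - 1/Z)) has_contour_integral 0) ?\<gamma>"
    proof (rule Cauchy_theorem_disc_simple[of _ 0 e])
      show "(\<lambda>u. K u / (u - 1/Z)) holomorphic_on ball 0 e"
      proof (intro holomorphic_intros)
        show "K holomorphic_on ball 0 e" by (rule holomorphic_on_subset[OF holK]) (auto simp: e_def)
        fix u assume "u \<in> ball (0::complex) e"
        then have "norm u < 1 / norm Z" by (auto simp: e_def)
        then show "u - 1/Z \<noteq> 0" by (auto simp: norm_divide)
      qed
    qed (use e r0 in auto)
    then show ?thesis using False by simp
  qed
  have hd: "((\<lambda>u. K u / (u - 1/Z) - K u / (u - 0)) has_contour_integral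
          (if r < norm Z then 2 * of_real pi * \<i> * K (1/Z) else 0)) ?\<gamma>"
    using has_contour_integral_diff[OF i1 i0] by simp
  have "((\<lambda>u. K (1 / (1/u)) / (Z - 1/u) / u^2) has_contour_integral
          (if r < norm Z then 2 * of_real pi * \<i> * K (1/Z) else 0)) ?\<gamma>"
  proof (rule has_contour_integral_eq[OF hd])
    fix u assume "u \<in> path_image ?\<gamma>"
    then have u: "norm u = 1/r" using r0 by auto
    then have u0: "u \<noteq> 0" using r0 by auto
    have "Z * u \<noteq> 1"
    proof
      assume "Z * u = 1"
      then have "norm Z * norm u = 1" by (metis norm_mult norm_one)
      then show False using u Z r by (auto simp: field_simps)
    qed
    then have d: "u - 1/Z \<noteq> 0" using Z by (auto simp: field_simps)
    have d2: "Z - 1/u \<noteq> 0" using \<open>Z * u \<noteq> 1\<close> u0 by (auto simp: field_simps)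
    show "K u / (u - 1/Z) - K u / (u - 0) = K (1 / (1/u)) / (Z - 1/u) / u^2"
      using u0 d d2 Z \<open>Z * u \<noteq> 1\<close> by (simp add: field_simps power2_eq_square)
  qed
  then have "contour_integral ?\<gamma> (\<lambda>u. K (1 / (1/u)) / (Z - 1/u) / u^2) =
             (if r < norm Z then 2 * of_real pi * \<i> * K (1/Z) else 0)"
    by (rule contour_integral_unique)
  then show ?thesis
    using circ_inv_subst[of r "\<lambda>z. K (1/z) / (Z - z)"] r by simp
qed



lemma rs_nonzero:
  assumes mer: "f meromorphic_on {z}" and ev: "eventually (\<lambda>w. f w \<noteq> 0) (at z)"
    and zo: "zorder f z = 0"
  shows "remove_sings f analytic_on {z} \<and> remove_sings f z \<noteq> 0"
proof -
  have iso: "isolated_singularity_at f z" and ness: "not_essential f z"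
    using mer meromorphic_at_iff by auto
  have np: "\<not> is_pole f z" using isolated_pole_imp_neg_zorder[OF iso] zo by auto
  then obtain c where c: "f \<midarrow>z\<rightarrow> c" using ness unfolding not_essential_def by auto
  have "c \<noteq> 0"
  proof
    assume "c = 0"
    then have "isolated_zero f z" using c ev unfolding isolated_zero_def by auto
    then have "zorder f z > 0" using zorder_isolated_zero_pos'[OF _ iso] by auto
    then show False using zo by simp
  qed
  then show ?thesis using remove_sings_analytic_at[OF iso c] remove_sings_eqI[OF c] by auto
qed

lemma zorder_linear: "zorder (\<lambda>w. w - a) z = (if a = z then 1 else 0)"
proof (cases "a = z")
  case True
  have "zorder (\<lambda>w. w - a) z = 1"
    by (rule zorder_eqI[where S = UNIV and g = "\<lambda>_. 1"]) (use True in auto)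
  then show ?thesis using True by simp
next
  case False
  have "zorder (\<lambda>w. w - a) z = 0"
    by (rule zorder_eq_0I) (use False in \<open>auto intro!: analytic_intros\<close>)
  then show ?thesis using False by simp
qed

lemma one_minus_notin: "norm (a::complex) < 1 \<Longrightarrow> 1 - a \<notin> \<real>\<^sub>\<le>\<^sub>0"
  using complex_Re_le_cmod[of a] by (auto simp: complex_nonpos_Reals_iff)



lemma pgf_sums:
  assumes "ereal (norm z) < conv_radius (\<lambda>k. complex_of_real (pmf X k))"
  shows "(\<lambda>k. complex_of_real (pmf X k) * z ^ k) sums pgf X z"
  unfolding pgf_def by (rule summable_sums[OF summable_in_conv_radius[OF assms]])

lemma pgf_of_real:
  assumes "ereal \<bar>r\<bar> < conv_radius (\<lambda>k. complex_of_real (pmf X k))"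
  shows "summable (\<lambda>k. pmf X k * r ^ k)"
    "pgf X (of_real r) = of_real (\<Sum>k. pmf X k * r ^ k)"
proof -
  have s: "(\<lambda>k. complex_of_real (pmf X k) * of_real r ^ k) sums pgf X (of_real r)"
    using pgf_sums[of "of_real r" X] assms by simp
  have s': "(\<lambda>k. complex_of_real (pmf X k * r ^ k)) sums pgf X (of_real r)"
    using s by simp
  have "summable (\<lambda>k. complex_of_real (pmf X k * r ^ k))"
    using sums_summable[OF s'] .
  then show sm: "summable (\<lambda>k. pmf X k * r ^ k)" by (simp only: summable_complex_of_real)
  have "(\<lambda>k. complex_of_real (pmf X k * r ^ k)) sums of_real (\<Sum>k. pmf X k * r ^ k)"
    by (rule sums_of_real[OF summable_sums[OF sm]])
  then show "pgf X (of_real r) = of_real (\<Sum>k. pmf X k * r ^ k)"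
    by (rule sums_unique2[OF s'])
qed

lemma pgf_norm_le:
  assumes "ereal (norm z) < conv_radius (\<lambda>k. complex_of_real (pmf X k))"
  shows "norm (pgf X z) \<le> (\<Sum>k. pmf X k * norm z ^ k)"
proof -
  have sm: "summable (\<lambda>k. pmf X k * norm z ^ k)"
    using pgf_of_real(1)[of "norm z" X] assms by simp
  have eq: "(\<lambda>k. norm (complex_of_real (pmf X k) * z ^ k)) = (\<lambda>k. pmf X k * norm z ^ k)"
    by (simp add: norm_mult norm_power)
  have "norm (pgf X z) \<le> (\<Sum>k. norm (complex_of_real (pmf X k) * z ^ k))"
    unfolding pgf_def by (rule summable_norm) (simp only: eq sm)
  then show ?thesis by (simp only: eq)
qed


lemma pmf_sums1: "(\<lambda>k. pmf X k) sums (1::real)"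
  using sums_infsetsum_nat'[OF pmf_abs_summable[of X UNIV]] infsetsum_pmf_eq_1[of X UNIV] by simp

lemma pgf_1:
  assumes "1 < conv_radius (\<lambda>k. complex_of_real (pmf X k))"
  shows "pgf X 1 = 1"
proof -
  have "pgf X (of_real 1) = of_real (\<Sum>k. pmf X k * 1 ^ k)"
    using pgf_of_real(2)[of 1 X] assms by (simp add: one_ereal_def)
  then show ?thesis using pmf_sums1[of X] by (simp add: sums_iff)
qed


theorem lemma3p4:
  fixes X :: "nat pmf" and R :: ereal and \<mu> \<gamma> \<epsilon> :: real and n s :: nat
    and zs :: "nat \<Rightarrow> complex" and Z0 :: complex
  assumes R_def: "R = conv_radius (\<lambda>k. complex_of_real (pmf X k))"
    and R_gt1: "R > 1"
    and mean: "(pgf X has_field_derivative complex_of_real \<mu>) (at 1)"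
    and mu_pos: "\<mu> > 0"
    and aperiodic: "\<And>r1 z. 0 < r1 \<Longrightarrow> ereal r1 < R \<Longrightarrow> norm z = r1 \<Longrightarrow>
                       z \<noteq> complex_of_real r1 \<Longrightarrow>
                       norm (pgf X z) < norm (pgf X (complex_of_real r1))"
    and n_pos: "0 < n" and s_pos: "0 < s"
    and load: "real n * \<mu> < real s"
    and degree: "\<exists>k. pmf X k > 0 \<and> real s / real n < real k"
    and gamma_def: "\<gamma> = (real s - real n * \<mu>) / sqrt (real s)"
    and zs_in: "\<And>j. j \<in> {1..<s} \<Longrightarrow> norm (zs j) < 1"
    and zs_zeros: "\<And>w. norm w < 1 \<Longrightarrow>
          int (card {j \<in> {1..<s}. zs j = w}) = zorder (\<lambda>z. z ^ s - (pgf X z) ^ n) w"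
    and Z0_zero: "Z0 ^ s - (pgf X Z0) ^ n = 0"
    and Z0_ann: "1 < norm Z0" "ereal (norm Z0) < R"
    and Z0_min: "\<And>z. z ^ s - (pgf X z) ^ n = 0 \<Longrightarrow> 1 < norm z \<Longrightarrow> ereal (norm z) < R \<Longrightarrow>
                   norm Z0 \<le> norm z"
    and eps: "\<epsilon> > 0" "1 + \<epsilon> < norm Z0"
  defines "logP \<equiv> (\<lambda>Z. \<Sum>j\<in>{1..<s}. Ln (1 - zs j / Z))"
    and "I \<equiv> (\<lambda>Z. contour_integral (circlepath 0 (1 + \<epsilon>))
                 (\<lambda>z. Ln (1 - (pgf X z) ^ n / z ^ s) / (Z - z)) / (2 * of_real pi * \<i>))"
  shows "(\<forall>Z. 1 + \<epsilon> < norm Z \<and> ereal (norm Z) < R \<longrightarrow>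
             logP Z = - Ln (1 - 1 / Z) + I Z)
       \<and> (\<forall>Z. 1 < norm Z \<and> norm Z < 1 + \<epsilon> \<longrightarrow>
             logP Z = - Ln (1 - 1 / Z) + Ln (1 - (pgf X Z) ^ n / Z ^ s) + I Z)
       \<and> logP 1 = complex_of_real (ln (\<gamma> * sqrt (real s))) + I 1"
proof -
  define c where "c = (\<lambda>k. complex_of_real (pmf X k))"
  define F where "F = (\<lambda>z::complex. z ^ s - (pgf X z) ^ n)"
  define \<rho> where "\<rho> = 1 + \<epsilon>"
  define \<rho>' where "\<rho>' = (\<rho> + norm Z0) / 2"
  have \<rho>: "1 < \<rho>" "\<rho> < \<rho>'" "\<rho>' < norm Z0"
    using eps by (auto simp: \<rho>_def \<rho>'_def)
  have \<rho>'R: "ereal \<rho>' < R"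
    using Z0_ann(2) \<rho>(3) by (meson ereal_less_eq(3) le_less_trans less_imp_le)
  have Rc: "R = conv_radius c" using R_def by (simp add: c_def)
  have ltR: "ereal x < R" if "x \<le> norm Z0" for x
    using Z0_ann(2) that by (meson ereal_less_eq(3) le_less_trans)
  have pgf_eq: "pgf X = eval_fps (Abs_fps c)"
    by (simp add: pgf_def eval_fps_def fun_eq_iff c_def)
  have fcr: "fps_conv_radius (Abs_fps c) = R"
    by (simp add: fps_conv_radius_def Rc)
  have hol_pgf: "pgf X holomorphic_on eball 0 R"
    unfolding pgf_eq by (rule holomorphic_on_eval_fps) (simp add: fcr)
  have hol_F: "F holomorphic_on eball 0 R"
    unfolding F_def by (intro holomorphic_intros hol_pgf)
  have an_F: "F analytic_on {w}" if "w \<in> eball 0 R" for w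
    using hol_F that analytic_at open_eball by blast
  have Dsub: "ball 0 \<rho>' \<subseteq> eball 0 R"
    using ltR \<rho> by (auto simp: dist_norm)
  have pgf1: "pgf X 1 = 1"
    using pgf_1[of X] R_gt1 R_def by simp
  have F1: "F 1 = 0" by (simp add: F_def pgf1)
  define D where "D = (of_nat s - of_nat n * of_real \<mu> :: complex)"
  have D_pos: "D = of_real (real s - real n * \<mu>)" "real s - real n * \<mu> > 0"
    using load by (auto simp: D_def)
  have Dnz: "D \<noteq> 0" using D_pos by (metis of_real_eq_0_iff less_irrefl)
  have dF: "(F has_field_derivative D) (at 1)"
  proof -
    have "(F has_field_derivative (of_nat s * 1 ^ (s - 1) - of_nat n * pgf X 1 ^ (n - 1) * of_real \<mu>)) (at 1)"
      unfolding F_def by (auto intro!: derivative_eq_intros mean)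
    then show ?thesis by (simp add: pgf1 D_def)
  qed
  define pr where "pr = (\<lambda>r. \<Sum>k. pmf X k * r ^ k)"
  have pgf_real: "pgf X (of_real r) = of_real (pr r)" if "0 \<le> r" "r \<le> norm Z0" for r
    using pgf_of_real(2)[of r X] ltR[OF that(2)] that(1) Rc by (simp add: pr_def c_def)
  have F_real: "F (of_real r) = of_real (r ^ s - pr r ^ n)" if "0 \<le> r" "r \<le> norm Z0" for r
    using pgf_real[OF that] by (simp add: F_def)
  have pr_nonneg: "0 \<le> pr r" if "0 \<le> r" "r \<le> norm Z0" for r
    unfolding pr_def
    by (rule suminf_nonneg) (use pgf_of_real(1)[of r X] ltR[OF that(2)] that(1) Rc c_def in auto)
  have pgf_le: "norm (pgf X w) \<le> pr (norm w)" if "norm w \<le> norm Z0" for w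
    using pgf_norm_le[of w X] ltR[OF that] Rc by (simp add: pr_def c_def)
  have ev_pos: "eventually (\<lambda>r. 0 < r ^ s - pr r ^ n) (at_right (1::real))"
  proof -
    have lim: "((\<lambda>y. (F y - F 1) / (y - 1)) \<longlongrightarrow> D) (at 1)"
      using dF by (simp add: has_field_derivative_iff)
    have fl: "filterlim (\<lambda>r::real. complex_of_real r) (at 1) (at_right 1)"
    proof (subst filterlim_at, intro conjI)
      show "\<forall>\<^sub>F r in at_right 1. complex_of_real r \<in> UNIV \<and> complex_of_real r \<noteq> 1"
        using eventually_at_right_less[of "1::real"] by eventually_elim auto
      show "((\<lambda>r::real. complex_of_real r) \<longlongrightarrow> 1) (at_right 1)"
        by (rule tendsto_eq_intros) (auto intro!: tendsto_eq_intros)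
    qed
    have "((\<lambda>r. Re ((F (of_real r) - F 1) / (of_real r - 1))) \<longlongrightarrow> Re D) (at_right 1)"
      by (intro tendsto_Re filterlim_compose[OF lim fl, unfolded o_def])
    then have "eventually (\<lambda>r. 0 < Re ((F (of_real r) - F 1) / (of_real r - 1))) (at_right 1)"
      using D_pos by (intro order_tendstoD(1)) auto
    moreover have "eventually (\<lambda>r. 1 < r \<and> r < \<rho>') (at_right (1::real))"
      using eventually_at_right_real[of 1 \<rho>'] \<rho> by (auto elim!: eventually_mono)
    ultimately show ?thesis
    proof eventually_elim
      case (elim r)
      have Fr: "F (of_real r) = of_real (r ^ s - pr r ^ n)" using F_real[of r] elim \<rho> by auto
      then have "Re ((F (of_real r) - F 1) / (of_real r - 1)) = (r ^ s - pr r ^ n) / (r - 1)"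
        using F1 by (simp flip: of_real_diff of_real_divide)
      then show ?case using elim by (simp add: zero_less_divide_iff)
    qed
  qed
  obtain b where b: "b > 1" "\<And>y. 1 < y \<Longrightarrow> y < b \<Longrightarrow> 0 < y ^ s - pr y ^ n"
    using ev_pos eventually_at_right[of "1::real" 2] by auto
  have key: "pr r ^ n < r ^ s" if r: "1 < r" "r < norm Z0" for r
  proof (rule ccontr)
    assume "\<not> pr r ^ n < r ^ s"
    then have hr: "Re (F (of_real r)) \<le> 0" using F_real[of r] r by simp
    define y where "y = (1 + min b r) / 2"
    have y: "1 < y" "y < b" "y < r" using b r by (auto simp: y_def)
    have hy: "0 \<le> Re (F (of_real y))" using F_real[of y] b(2)[OF y(1) y(2)] y r by simp
    have cF: "continuous_on (eball 0 R) F" by (rule holomorphic_on_imp_continuous_on[OF hol_F])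
    have "continuous_on {y..r} (\<lambda>t. F (of_real t))"
      by (rule continuous_on_compose2[OF cF continuous_on_of_real]) (use ltR r y in \<open>auto simp: dist_norm\<close>)
    then have "continuous_on {y..r} (\<lambda>t. Re (F (of_real t)))" by (rule continuous_on_Re)
    then obtain x where x: "y \<le> x" "x \<le> r" "Re (F (of_real x)) = 0"
      using IVT2'[of "\<lambda>t. Re (F (of_real t))" r 0 y] hr hy y by auto
    have Fx: "F (of_real x) = of_real (x ^ s - pr x ^ n)" by (rule F_real) (use x y r in auto)
    have "F (of_real x) = 0" by (metis Fx x(3) Re_complex_of_real of_real_0)
    then have "norm Z0 \<le> norm (complex_of_real x)"
      by (intro Z0_min) (use x y r ltR[of x] in \<open>auto simp: F_def\<close>)
    then show False using x y r by simp
  qed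
  have normA: "norm (pgf X w ^ n / w ^ s) < 1" if w: "1 < norm w" "norm w < norm Z0" for w
  proof -
    have "norm (pgf X w) ^ n \<le> pr (norm w) ^ n"
      by (rule power_mono[OF pgf_le]) (use w in auto)
    also have "\<dots> < norm w ^ s" by (rule key) (use w in auto)
    finally have "norm (pgf X w) ^ n < norm w ^ s" .
    moreover have "0 < norm w ^ s" using w by (auto intro!: zero_less_power)
    ultimately show ?thesis by (simp add: norm_divide norm_power divide_less_eq_1_pos)
  qed
  have F_nz_ann: "F w \<noteq> 0" if w: "1 < norm w" "norm w < norm Z0" for w
  proof
    assume "F w = 0"
    then have "norm Z0 \<le> norm w" by (intro Z0_min) (use w ltR[of "norm w"] in \<open>auto simp: F_def\<close>)
    then show False using w by simp
  qed
  have F_nz_circle: "F w \<noteq> 0" if w: "norm w = 1" "w \<noteq> 1" for w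
  proof
    assume F0: "F w = 0"
    have "norm (pgf X w) < norm (pgf X (complex_of_real 1))"
      by (rule aperiodic) (use w R_gt1 in \<open>auto simp: one_ereal_def\<close>)
    then have lt: "norm (pgf X w) < 1" by (simp add: pgf1)
    have "norm (pgf X w) ^ n < 1 ^ n"
      by (rule power_strict_mono) (use lt n_pos in auto)
    moreover have "w ^ s = pgf X w ^ n" using F0 by (simp add: F_def)
    then have "norm (pgf X w) ^ n = 1" using w by (metis norm_power power_one)
    ultimately show False by simp
  qed
  have F_nz: "F w \<noteq> 0" if "1 \<le> norm w" "norm w < norm Z0" "w \<noteq> 1" for w
    using F_nz_ann F_nz_circle that by force
  define J where "J = {1..<s}"
  have finJ: "finite J" by (simp add: J_def)
  have cardJ: "card J = s - 1" by (simp add: J_def)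
  have zsJ: "norm (zs j) < 1" if "j \<in> J" for j using zs_in that by (simp add: J_def)
  define Q where "Q = (\<lambda>w::complex. (w - 1) * (\<Prod>j\<in>J. (w - zs j)))"
  have Q_nz: "Q w \<noteq> 0" if "1 \<le> norm w" "w \<noteq> 1" for w
  proof -
    have "w - zs j \<noteq> 0" if "j \<in> J" for j using zsJ[OF that] \<open>1 \<le> norm w\<close> by auto
    then show ?thesis using that finJ by (auto simp: Q_def)
  qed
  have an_Q: "Q analytic_on A" for A unfolding Q_def by (intro analytic_intros)
  have evQ: "eventually (\<lambda>v. Q v \<noteq> 0) (at w)" for w
  proof -
    have "\<forall>\<^sub>F v in at w. Q v \<noteq> 0 \<and> v \<in> UNIV"
      by (rule non_zero_neighbour_alt[of Q UNIV w 2])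
        (use Q_nz[of 2] in \<open>auto intro: analytic_imp_holomorphic an_Q\<close>)
    then show ?thesis by (auto elim: eventually_mono)
  qed
  have Fm1: "F (-1) \<noteq> 0" by (rule F_nz_circle) auto
  have evF: "eventually (\<lambda>v. F v \<noteq> 0) (at w)" if "w \<in> ball 0 \<rho>'" for w
  proof -
    have "\<forall>\<^sub>F v in at w. F v \<noteq> 0 \<and> v \<in> ball 0 \<rho>'"
      by (rule non_zero_neighbour_alt[of F "ball 0 \<rho>'" w "-1"])
        (use that Fm1 \<rho> holomorphic_on_subset[OF hol_F Dsub] in auto)
    then show ?thesis by (auto elim: eventually_mono)
  qed
  have zoQ: "zorder Q w = (if w = 1 then 1 else 0) + int (card {j\<in>J. zs j = w})" for w
  proof -
    have evP: "eventually (\<lambda>v. (\<Prod>j\<in>J. v - zs j) \<noteq> 0) (at w)"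
      using evQ[of w] by (auto simp: Q_def elim: eventually_mono)
    have "zorder Q w = zorder (\<lambda>v. v - 1) w + zorder (\<lambda>v. \<Prod>j\<in>J. v - zs j) w"
      unfolding Q_def by (rule zorder_times_analytic) (use evQ[of w] in \<open>auto simp: Q_def intro!: analytic_intros\<close>)
    also have "zorder (\<lambda>v. \<Prod>j\<in>J. v - zs j) w = (\<Sum>j\<in>J. zorder (\<lambda>v. v - zs j) w)"
      by (rule zorder_prod_analytic) (use evP in \<open>auto intro!: analytic_intros\<close>)
    also have "\<dots> = (\<Sum>j\<in>J. if zs j = w then 1 else 0)"
      by (simp add: zorder_linear)
    also have "\<dots> = int (card {j\<in>J. zs j = w})"
      using finJ by (simp add: sum.If_cases Int_def)
    finally show ?thesis by (auto simp: zorder_linear)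
  qed
  have zoF: "zorder F w = (if w = 1 then 1 else 0) + int (card {j\<in>J. zs j = w})"
    if w: "w \<in> ball 0 \<rho>'" for w
  proof -
    have wR: "w \<in> eball 0 R" using w Dsub by blast
    have fr: "frequently (\<lambda>v. F v \<noteq> 0) (at w)"
      using evF[OF w] by (simp add: eventually_frequently)
    consider "norm w < 1" | "w = 1" | "1 \<le> norm w" "w \<noteq> 1" using not_less by blast
    then show ?thesis
    proof cases
      case 1
      then have "w \<noteq> 1" by auto
      then show ?thesis using zs_zeros[OF 1] by (simp add: F_def J_def)
    next
      case 2
      have "{j\<in>J. zs j = w} = {}" using zsJ 2 by force
      then have "card {j\<in>J. zs j = w} = 0" by (metis card.empty)
      moreover have "zorder F 1 = 1"
      proof (rule zorder_zero_eqI')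
        show "F analytic_on {1}" using an_F wR 2 by simp
        show "(deriv ^^ nat 1) F 1 \<noteq> 0" using DERIV_imp_deriv[OF dF] Dnz by simp
      qed (use F1 in auto)
      ultimately show ?thesis using 2 by simp
    next
      case 3
      have "{j\<in>J. zs j = w} = {}" using zsJ 3 by force
      then have "card {j\<in>J. zs j = w} = 0" by (metis card.empty)
      moreover have "zorder F w = 0"
        by (rule zorder_eq_0I[OF an_F[OF wR] F_nz]) (use 3 w \<rho> in auto)
      ultimately show ?thesis using 3 by simp
    qed
  qed
  define g where "g = remove_sings (\<lambda>w. F w / Q w)"
  have g_an: "g analytic_on {w} \<and> g w \<noteq> 0" if w: "w \<in> ball 0 \<rho>'" for w
    unfolding g_def
  proof (rule rs_nonzero)
    have wR: "w \<in> eball 0 R" using w Dsub by blast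
    show "(\<lambda>w. F w / Q w) meromorphic_on {w}"
      by (intro meromorphic_intros analytic_on_imp_meromorphic_on an_F[OF wR] an_Q)
    show ev: "\<forall>\<^sub>F v in at w. F v / Q v \<noteq> 0"
      using evF[OF w] evQ[of w] by eventually_elim auto
    show "zorder (\<lambda>w. F w / Q w) w = 0"
    proof (subst zorder_divide)
      show "F meromorphic_on {w}" by (intro analytic_on_imp_meromorphic_on an_F[OF wR])
      show "Q meromorphic_on {w}" by (intro analytic_on_imp_meromorphic_on an_Q)
      show "\<exists>\<^sub>F v in at w. F v \<noteq> 0" using evF[OF w] by (simp add: eventually_frequently)
      show "\<exists>\<^sub>F v in at w. Q v \<noteq> 0" using evQ[of w] by (simp add: eventually_frequently)
      show "zorder F w - zorder Q w = 0" using zoF[OF w] zoQ[of w] by simp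
    qed
  qed
  have g_eq: "g w = F w / Q w" if w: "w \<in> ball 0 \<rho>'" "Q w \<noteq> 0" for w
  proof -
    have wR: "w \<in> eball 0 R" using w Dsub by blast
    have "(\<lambda>w. F w / Q w) analytic_on {w}"
      by (intro analytic_intros an_F[OF wR] an_Q) (use w(2) in auto)
    then show ?thesis unfolding g_def by (rule remove_sings_at_analytic)
  qed
  have hol_g: "g holomorphic_on ball 0 \<rho>'"
  proof -
    have a: "\<forall>w\<in>ball 0 \<rho>'. g analytic_on {w}" using g_an by blast
    have "g analytic_on ball 0 \<rho>'" by (subst analytic_on_analytic_at) (rule a)
    then show ?thesis by (rule analytic_imp_holomorphic)
  qed
  obtain G where G: "G holomorphic_on ball 0 \<rho>'" "\<And>z. z \<in> ball 0 \<rho>' \<Longrightarrow> g z = exp (G z)"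
  proof (rule contractible_imp_holomorphic_log[OF hol_g convex_imp_contractible[OF convex_ball]])
    fix z :: complex assume "z \<in> ball 0 \<rho>'" then show "g z \<noteq> 0" using g_an by blast
  next
    fix G' :: "complex \<Rightarrow> complex" assume "G' holomorphic_on ball 0 \<rho>'" "\<And>z. z \<in> ball 0 \<rho>' \<Longrightarrow> g z = exp (G' z)"
    then show thesis by (rule that)
  qed
  have om: "1 - a \<noteq> 0" if "norm (a::complex) < 1" for a
    using that by (metis eq_iff_diff_eq_0 norm_one less_irrefl)
  define L where "L = (\<lambda>w. Ln (1 - pgf X w ^ n / w ^ s))"
  define K where "K = (\<lambda>u::complex. Ln (1 - u) + (\<Sum>j\<in>J. Ln (1 - zs j * u)))"
  define E where "E = (\<lambda>w::complex. K (1 / w))"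
  define U where "U = {w::complex. 1 < norm (w - 0) \<and> norm (w - 0) < \<rho>'}"
  have U_iff: "w \<in> U \<longleftrightarrow> 1 < norm w \<and> norm w < \<rho>'" for w by (simp add: U_def)
  have conU: "connected U" unfolding U_def by (rule connected_annulus(1)) simp
  have U_eq: "U = ball 0 \<rho>' \<inter> - cball 0 1" by (auto simp: U_def)
  have openU: "open U" unfolding U_eq by (intro open_Int open_ball) auto
  have UD: "U \<subseteq> ball 0 \<rho>'" by (auto simp: U_def)
  have UR: "U \<subseteq> eball 0 R" using UD Dsub by blast
  have U0: "w \<noteq> 0" if "w \<in> U" for w using that by (auto simp: U_def)
  have normA_U: "norm (pgf X w ^ n / w ^ s) < 1" if "w \<in> U" for w
    using normA[of w] that \<rho> by (auto simp: U_def)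
  have nzu: "norm (zs j * u) < 1" if "j \<in> J" "norm u < 1" for j u
  proof -
    have "norm (zs j) * norm u \<le> 1 * norm u"
      by (rule mult_right_mono) (use zsJ[OF that(1)] in auto)
    then show ?thesis using that(2) by (simp add: norm_mult)
  qed
  have holK: "K holomorphic_on ball 0 1"
    unfolding K_def
    by (intro holomorphic_intros) (auto intro!: one_minus_notin nzu)
  have K0: "K 0 = 0" by (simp add: K_def)
  have inv_lt: "norm (1 / w) < 1" if "w \<in> U" for w
    using that by (auto simp: U_def norm_divide divide_less_eq)
  have nzuU: "norm (zs j / w) < 1" if "j \<in> J" "w \<in> U" for j w
    using nzu[OF that(1) inv_lt[OF that(2)]] by simp
  have holE: "E holomorphic_on U"
    unfolding E_def K_def
    by (intro holomorphic_intros) (auto intro!: one_minus_notin nzu nzuU inv_lt dest: U0)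
  have holL: "L holomorphic_on U"
    unfolding L_def
    by (intro holomorphic_intros holomorphic_on_subset[OF hol_pgf UR])
       (auto intro!: one_minus_notin normA_U dest: U0)
  have expL: "exp (L w) = 1 - pgf X w ^ n / w ^ s" if "w \<in> U" for w
  proof -
    have "1 - pgf X w ^ n / w ^ s \<noteq> 0" using om[OF normA_U[OF that]] .
    then show ?thesis by (simp add: L_def)
  qed
  have expE: "exp (E w) = Q w / w ^ s" if w: "w \<in> U" for w
  proof -
    have w0: "w \<noteq> 0" using U0[OF w] .
    have nz1: "1 - 1 / w \<noteq> 0" using om[OF inv_lt[OF w]] .
    have nzj: "1 - zs j * (1 / w) \<noteq> 0" if "j \<in> J" for j
      using om[OF nzu[OF that inv_lt[OF w]]] .
    have "exp (E w) = exp (Ln (1 - 1 / w)) * (\<Prod>j\<in>J. exp (Ln (1 - zs j * (1 / w))))"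
      by (simp add: E_def K_def exp_add exp_sum finJ)
    also have "\<dots> = (1 - 1 / w) * (\<Prod>j\<in>J. 1 - zs j * (1 / w))"
      using nz1 nzj by simp
    also have "(\<Prod>j\<in>J. 1 - zs j * (1 / w)) = (\<Prod>j\<in>J. (w - zs j) / w)"
      by (rule prod.cong) (use w0 in \<open>auto simp: field_simps\<close>)
    also have "\<dots> = (\<Prod>j\<in>J. (w - zs j)) / w ^ (s - 1)"
      by (simp add: prod_dividef cardJ)
    also have "(1 - 1 / w) * ((\<Prod>j\<in>J. (w - zs j)) / w ^ (s - 1)) = Q w / (w * w ^ (s - 1))"
      using w0 by (simp add: Q_def field_simps)
    also have "w * w ^ (s - 1) = w ^ s" using s_pos by (cases s) auto
    finally show ?thesis .
  qed
  have expLE: "exp (L w - E w) = F w / Q w" if w: "w \<in> U" for w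
  proof -
    have w0: "w \<noteq> 0" using U0[OF w] .
    have "Q w \<noteq> 0" by (rule Q_nz) (use w in \<open>auto simp: U_def\<close>)
    then show ?thesis using w0
      by (simp add: exp_diff expL[OF w] expE[OF w] F_def field_simps)
  qed
  have LEG: "exp (L w - E w) = exp (G w)" if w: "w \<in> U" for w
  proof -
    have "Q w \<noteq> 0" by (rule Q_nz) (use w in \<open>auto simp: U_def\<close>)
    then have "g w = F w / Q w" using g_eq w UD by blast
    then show ?thesis using expLE[OF w] G(2) w UD by auto
  qed
  define \<phi> where "\<phi> = (\<lambda>w. (L w - E w - G w) / (2 * of_real pi * \<i>))"
  have \<phi>int: "\<exists>m::int. \<phi> w = of_int m" if w: "w \<in> U" for w
  proof -
    obtain m :: int where m: "L w - E w = G w + of_int (2 * m) * pi * \<i>"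
      using LEG[OF w] by (auto simp: exp_eq)
    then have "\<phi> w = of_int m" by (simp add: \<phi>_def field_simps)
    then show ?thesis by blast
  qed
  have cont\<phi>: "continuous_on U \<phi>"
    unfolding \<phi>_def
    by (intro holomorphic_on_imp_continuous_on holomorphic_intros holL holE
          holomorphic_on_subset[OF G(1) UD]) auto
  have "\<phi> constant_on U"
  proof (rule continuous_discrete_range_constant[OF conU cont\<phi>])
    fix x assume x: "x \<in> U"
    obtain a :: int where a: "\<phi> x = of_int a" using \<phi>int[OF x] by blast
    show "\<exists>e>0. \<forall>y. y \<in> U \<and> \<phi> y \<noteq> \<phi> x \<longrightarrow> e \<le> norm (\<phi> y - \<phi> x)"
    proof (intro exI[of _ 1] conjI allI impI)
      fix y assume y: "y \<in> U \<and> \<phi> y \<noteq> \<phi> x"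
      obtain b :: int where b: "\<phi> y = of_int b" using \<phi>int y by blast
      have "a \<noteq> b" using a b y by auto
      then have "1 \<le> \<bar>of_int (b - a) :: real\<bar>" by linarith
      also have "\<dots> = norm (of_int (b - a) :: complex)" by (simp only: norm_of_int)
      finally show "1 \<le> norm (\<phi> y - \<phi> x)" using a b by simp
    qed simp
  qed
  then obtain cst where cst: "\<And>w. w \<in> U \<Longrightarrow> \<phi> w = cst"
    unfolding constant_on_def by blast
  have \<rho>U: "complex_of_real \<rho> \<in> U" using \<rho> by (simp add: U_def)
  obtain m :: int where m: "\<phi> (complex_of_real \<rho>) = of_int m" using \<phi>int[OF \<rho>U] by blast
  define M where "M = (\<lambda>w. G w + 2 * of_real pi * \<i> * of_int m)"
  have holM: "M holomorphic_on ball 0 \<rho>'"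
    unfolding M_def by (intro holomorphic_intros G(1))
  have LEM: "L w = E w + M w" if w: "w \<in> U" for w
  proof -
    have "\<phi> w = of_int m" using cst[OF w] cst[OF \<rho>U] m by simp
    then show ?thesis by (simp add: \<phi>_def M_def field_simps)
  qed
  have e2pi: "exp (2 * of_real pi * \<i> * of_int m) = 1"
    using exp_2pi_1_int[of m] by (simp add: mult_ac)
  have expM: "exp (M w) = g w" if "w \<in> ball 0 \<rho>'" for w
    using G(2)[OF that] by (simp add: M_def exp_add e2pi)
  have sphU: "path_image (circlepath 0 \<rho>) \<subseteq> U" using \<rho> by (auto simp: U_def)
  have sph: "norm z = \<rho>" if "z \<in> path_image (circlepath 0 \<rho>)" for z
    using that \<rho> by auto
  have pi0: "2 * of_real pi * \<i> \<noteq> (0::complex)" by simp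
  have I_eq: "I Z = contour_integral (circlepath 0 \<rho>) (\<lambda>z. L z / (Z - z)) / (2 * of_real pi * \<i>)" for Z
    by (simp add: I_def L_def \<rho>_def)
  have cE: "continuous_on (path_image (circlepath 0 \<rho>)) E"
    by (rule continuous_on_subset[OF holomorphic_on_imp_continuous_on[OF holE] sphU])
  have cM: "continuous_on (path_image (circlepath 0 \<rho>)) M"
    by (rule continuous_on_subset[OF holomorphic_on_imp_continuous_on[OF holM]]) (use sphU UD in blast)
  have split: "contour_integral (circlepath 0 \<rho>) (\<lambda>z. L z / (Z - z)) =
      contour_integral (circlepath 0 \<rho>) (\<lambda>z. E z / (Z - z)) + contour_integral (circlepath 0 \<rho>) (\<lambda>z. M z / (Z - z))"
    if Z: "norm Z \<noteq> \<rho>" for Z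
  proof -
    have nz: "Z - z \<noteq> 0" if "z \<in> path_image (circlepath 0 \<rho>)" for z
      using sph[OF that] Z by auto
    have "contour_integral (circlepath 0 \<rho>) (\<lambda>z. L z / (Z - z)) =
          contour_integral (circlepath 0 \<rho>) (\<lambda>z. E z / (Z - z) + M z / (Z - z))"
      by (rule contour_integral_cong) (use sphU LEM in \<open>auto simp: add_divide_distrib\<close>)
    also have "\<dots> = contour_integral (circlepath 0 \<rho>) (\<lambda>z. E z / (Z - z)) + contour_integral (circlepath 0 \<rho>) (\<lambda>z. M z / (Z - z))"
    proof (rule contour_integral_add)
      show "(\<lambda>z. E z / (Z - z)) contour_integrable_on circlepath 0 \<rho>"
        by (intro contour_integrable_continuous_circlepath continuous_intros cE) (use nz in blast)
      show "(\<lambda>z. M z / (Z - z)) contour_integrable_on circlepath 0 \<rho>"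
        by (intro contour_integrable_continuous_circlepath continuous_intros cM) (use nz in blast)
    qed
    finally show ?thesis .
  qed
  have intE: "contour_integral (circlepath 0 \<rho>) (\<lambda>z. E z / (Z - z)) =
      (if \<rho> < norm Z then 2 * of_real pi * \<i> * K (1/Z) else 0)" if "Z \<noteq> 0" "norm Z \<noteq> \<rho>" for Z
    unfolding E_def by (rule ext_part[OF holK K0 \<rho>(1) that])
  have intM_in: "contour_integral (circlepath 0 \<rho>) (\<lambda>z. M z / (Z - z)) = - (2 * of_real pi * \<i> * M Z)"
    if Z: "norm Z < \<rho>" for Z
  proof -
    have hc: "M holomorphic_on cball 0 \<rho>"
      by (rule holomorphic_on_subset[OF holM]) (use \<rho>(2) in \<open>auto simp: subset_iff dist_norm intro: le_less_trans\<close>)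
    have "((\<lambda>u. M u / (u - Z)) has_contour_integral (2 * of_real pi * \<i> * M Z)) (circlepath 0 \<rho>)"
      by (rule Cauchy_integral_circlepath_simple[OF hc]) (use Z in simp)
    then have "contour_integral (circlepath 0 \<rho>) (\<lambda>u. M u / (u - Z)) = 2 * of_real pi * \<i> * M Z"
      by (rule contour_integral_unique)
    moreover have "contour_integral (circlepath 0 \<rho>) (\<lambda>z. M z / (Z - z)) =
        contour_integral (circlepath 0 \<rho>) (\<lambda>z. - (M z / (z - Z)))"
    proof (rule contour_integral_cong)
      fix z show "M z / (Z - z) = - (M z / (z - Z))" by (metis minus_diff_eq minus_divide_right)
    qed simp
    ultimately show ?thesis by (simp add: contour_integral_neg)
  qed
  have intM_out: "contour_integral (circlepath 0 \<rho>) (\<lambda>z. M z / (Z - z)) = 0"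
    if Z: "\<rho> < norm Z" for Z
  proof -
    define e where "e = min \<rho>' (norm Z)"
    have e: "\<rho> < e" using Z \<rho> by (auto simp: e_def)
    have "((\<lambda>z. M z / (Z - z)) has_contour_integral 0) (circlepath 0 \<rho>)"
    proof (rule Cauchy_theorem_disc_simple[of _ 0 e])
      show "(\<lambda>z. M z / (Z - z)) holomorphic_on ball 0 e"
      proof (intro holomorphic_intros holomorphic_on_subset[OF holM])
        show "ball 0 e \<subseteq> ball 0 \<rho>'" by (auto simp: e_def)
        fix z assume "z \<in> ball (0::complex) e"
        then have "norm z < norm Z" by (auto simp: e_def)
        then show "Z - z \<noteq> 0" by auto
      qed
    qed (use e \<rho> in auto)
    then show ?thesis by (rule contour_integral_unique)
  qed
  have I_out: "I Z = E Z" if Z: "\<rho> < norm Z" for Z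
  proof -
    have Z0': "Z \<noteq> 0" "norm Z \<noteq> \<rho>" using Z \<rho> by auto
    have "I Z = K (1 / Z)" using Z pi0
      by (simp add: I_eq split[OF Z0'(2)] intE[OF Z0'] intM_out[OF Z])
    then show ?thesis by (simp add: E_def)
  qed
  have I_in: "I Z = - M Z" if Z: "0 < norm Z" "norm Z < \<rho>" for Z
  proof -
    have Z0': "Z \<noteq> 0" "norm Z \<noteq> \<rho>" using Z by auto
    show ?thesis using Z pi0
      by (simp add: I_eq split[OF Z0'(2)] intE[OF Z0'] intM_in[OF Z(2)])
  qed
  have E_logP: "E Z = Ln (1 - 1 / Z) + logP Z" for Z
    by (simp add: E_def K_def logP_def J_def)
  have part1: "\<forall>Z. 1 + \<epsilon> < norm Z \<and> ereal (norm Z) < R \<longrightarrow> logP Z = - Ln (1 - 1 / Z) + I Z"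
    using I_out E_logP by (auto simp: \<rho>_def)
  have part2: "\<forall>Z. 1 < norm Z \<and> norm Z < 1 + \<epsilon> \<longrightarrow>
             logP Z = - Ln (1 - 1 / Z) + Ln (1 - (pgf X Z) ^ n / Z ^ s) + I Z"
  proof (intro allI impI)
    fix Z :: complex assume Z: "1 < norm Z \<and> norm Z < 1 + \<epsilon>"
    then have ZU: "Z \<in> U" using \<rho> by (auto simp: U_def \<rho>_def)
    have "I Z = - M Z" by (rule I_in) (use Z in \<open>auto simp: \<rho>_def\<close>)
    moreover have "Ln (1 - (pgf X Z) ^ n / Z ^ s) = E Z + M Z"
      using LEM[OF ZU] by (simp add: L_def)
    ultimately show "logP Z = - Ln (1 - 1 / Z) + Ln (1 - (pgf X Z) ^ n / Z ^ s) + I Z"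
      using E_logP[of Z] by simp
  qed
  have oneD: "(1::complex) \<in> ball 0 \<rho>'" using \<rho> by simp
  define P1 where "P1 = (\<Prod>j\<in>J. (1 - zs j))"
  have P1nz: "P1 \<noteq> 0"
    unfolding P1_def using finJ om[OF zsJ] by (auto simp: prod_zero_iff)
  have g1: "g 1 = D / P1"
  proof -
    have lim1: "((\<lambda>w. (F w - F 1) / (w - 1)) \<longlongrightarrow> D) (at 1)"
      using dF by (simp add: has_field_derivative_iff)
    have lim2: "((\<lambda>w. \<Prod>j\<in>J. (w - zs j)) \<longlongrightarrow> P1) (at 1)"
      unfolding P1_def by (intro tendsto_eq_intros) auto
    have "((\<lambda>w. (F w - F 1) / (w - 1) / (\<Prod>j\<in>J. (w - zs j))) \<longlongrightarrow> D / P1) (at 1)"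
      by (rule tendsto_divide[OF lim1 lim2 P1nz])
    moreover have "(\<lambda>w. (F w - F 1) / (w - 1) / (\<Prod>j\<in>J. (w - zs j))) = (\<lambda>w. F w / Q w)"
      by (simp add: F1 Q_def divide_divide_eq_left)
    ultimately have "((\<lambda>w. F w / Q w) \<longlongrightarrow> D / P1) (at 1)" by simp
    then show ?thesis unfolding g_def by (rule remove_sings_eqI)
  qed
  have expM1: "exp (M 1) = D / P1" using expM[OF oneD] g1 by simp
  have explogP1: "exp (logP 1) = P1"
  proof -
    have "exp (logP 1) = (\<Prod>j\<in>J. exp (Ln (1 - zs j)))"
      by (simp add: logP_def J_def exp_sum)
    also have "\<dots> = P1" unfolding P1_def
      by (rule prod.cong) (use om[OF zsJ] in auto)
    finally show ?thesis .
  qed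
  have expsum: "exp (M 1 + logP 1) = D"
    using P1nz by (simp add: exp_add expM1 explogP1)
  have cM1: "isCont M 1"
    using holomorphic_on_imp_continuous_on[OF holM] oneD
    by (simp add: continuous_on_eq_continuous_at)
  have clogP1: "isCont logP 1"
    unfolding logP_def
    by (intro isCont_sum ballI isCont_Ln' continuous_intros)
       (auto intro!: one_minus_notin zs_in)
  have cT: "isCont (\<lambda>r::real. M (of_real r) + logP (of_real r)) 1"
  proof (rule isCont_o2[where g = "\<lambda>w. M w + logP w"])
    show "isCont (\<lambda>r::real. complex_of_real r) 1" by (intro continuous_intros)
    show "isCont (\<lambda>w. M w + logP w) (complex_of_real 1)" using cM1 clogP1 by (simp add: continuous_add)
  qed
  have lim: "((\<lambda>r. Im (M (of_real r) + logP (of_real r))) \<longlongrightarrow> Im (M 1 + logP 1)) (at_right (1::real))"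
  proof (rule tendsto_Im)
    have "((\<lambda>r::real. M (of_real r) + logP (of_real r)) \<longlongrightarrow> M (of_real 1) + logP (of_real 1)) (at 1)"
      using cT by (simp add: isCont_def)
    then show "((\<lambda>r::real. M (of_real r) + logP (of_real r)) \<longlongrightarrow> M 1 + logP 1) (at_right 1)"
      by (auto intro: tendsto_mono[OF at_le])
  qed
  have ev0: "eventually (\<lambda>r. Im (M (of_real r) + logP (of_real r)) = 0) (at_right (1::real))"
  proof (rule eventually_mono[OF eventually_at_right_real[of 1 \<rho>']])
    show "1 < \<rho>'" using \<rho> by simp
  next
    fix r :: real assume r: "r \<in> {1<..<\<rho>'}"
    then have wU: "complex_of_real r \<in> U" by (simp add: U_def)
    have r0: "0 < r" using r by simp
    have pos1: "0 < 1 - pr r ^ n / r ^ s"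
      using key[of r] r \<rho> r0 by (simp add: field_simps)
    have pos2: "0 < 1 - 1 / r" using r by (simp add: field_simps)
    have Lr: "L (of_real r) = of_real (ln (1 - pr r ^ n / r ^ s))"
    proof -
      have eq: "1 - pgf X (of_real r) ^ n / (of_real r) ^ s = complex_of_real (1 - pr r ^ n / r ^ s)"
        using pgf_real[of r] r \<rho> by simp
      show ?thesis unfolding L_def eq by (rule Ln_of_real[OF pos1])
    qed
    have Er: "Ln (1 - 1 / complex_of_real r) = of_real (ln (1 - 1 / r))"
    proof -
      have eq: "1 - 1 / complex_of_real r = complex_of_real (1 - 1 / r)" by simp
      show ?thesis unfolding eq by (rule Ln_of_real[OF pos2])
    qed
    have "M (of_real r) + logP (of_real r) = L (of_real r) - Ln (1 - 1 / complex_of_real r)"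
      using LEM[OF wU] E_logP[of "of_real r"] by simp
    also have "\<dots> = of_real (ln (1 - pr r ^ n / r ^ s) - ln (1 - 1 / r))"
      by (simp add: Lr Er)
    finally show "Im (M (of_real r) + logP (of_real r)) = 0" by simp
  qed
  have Im0: "Im (M 1 + logP 1) = 0"
    using tendsto_unique[OF _ lim tendsto_eventually[OF ev0]] by simp
  define t where "t = Re (M 1 + logP 1)"
  have tdef: "M 1 + logP 1 = of_real t" using Im0 by (simp add: t_def complex_eq_iff)
  have "complex_of_real (exp t) = complex_of_real (real s - real n * \<mu>)"
    using expsum D_pos(1) by (simp add: tdef flip: exp_of_real)
  then have "exp t = real s - real n * \<mu>" by (simp only: of_real_eq_iff)
  then have tln: "t = ln (real s - real n * \<mu>)" by (metis ln_exp)
  have gs: "\<gamma> * sqrt (real s) = real s - real n * \<mu>"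
    using s_pos by (simp add: gamma_def)
  have part3: "logP 1 = complex_of_real (ln (\<gamma> * sqrt (real s))) + I 1"
  proof -
    have I1: "I 1 = - M 1" by (rule I_in) (use \<rho> in auto)
    have h: "logP 1 = of_real t - M 1" using tdef by (metis add_diff_cancel_left')
    have "complex_of_real (ln (\<gamma> * sqrt (real s))) = of_real t" by (simp only: gs tln)
    then show ?thesis using h I1 by simp
  qed
  show ?thesis using part1 part2 part3 by blast
qed
end
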